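(* Let $G$ be a finitely generated group. If the finite index membership problem $MP_{f.i.}(G)$ is decidable, then $GCP_{Rec}(G)$ is decidable: there is an algorithm which, given a recognizable subset $K\subseteq G$ and $g\in G$, decides whether some conjugate of $g$ in $G$ lies in $K$.
   Context: $MP_{f.i.}(G)$ is the problem of deciding, given $g\in G$ and a finite index subgroup $H\le G$, whether $g\in H$. A subset $K$ of $G$ is recognizable if its full preimage in the free monoid $\tilde A^*$ on $A\cup A^{-1}$ (for a finite generating set $A$) is a rational (regular) language; equivalently $K$ is a finite union of cosets $Hb_1\cup\cdots\cup Hb_m$ of a finite index subgroup $H\le G$, and recognizable subsets are given in this form. *)

theory Defs
  imports "HOL-Algebra.Generated_Groups" "HOL-Library.Nat_Bijection"
begin

text \<open>Unary partial recursive functions on natural numbers, tuples being coded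
with the Cantor pairing prod_encode. Zero, successor, identity, projections,
composition, pairing, primitive recursion and unbounded minimisation; this is
a standard Turing-complete model.\<close>

datatype recf =
    Zero | Succ | Ident | Fst | Snd
  | Comp recf recf
  | Pair recf recf
  | Prec recf recf
  | Mu recf

inductive eval :: "recf \<Rightarrow> nat \<Rightarrow> nat \<Rightarrow> bool" where
  "eval Zero x 0"
| "eval Succ x (Suc x)"
| "eval Ident x x"
| "eval Fst x (fst (prod_decode x))"
| "eval Snd x (snd (prod_decode x))"
| "eval f x y \<Longrightarrow> eval g y z \<Longrightarrow> eval (Comp g f) x z"
| "eval f x y \<Longrightarrow> eval g x z \<Longrightarrow> eval (Pair f g) x (prod_encode (y, z))"
| "eval f x y \<Longrightarrow> eval (Prec f g) (prod_encode (x, 0)) y"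
| "eval (Prec f g) (prod_encode (x, n)) y \<Longrightarrow>
   eval g (prod_encode (x, prod_encode (n, y))) z \<Longrightarrow>
   eval (Prec f g) (prod_encode (x, Suc n)) z"
| "eval f (prod_encode (x, n)) 0 \<Longrightarrow>
   (\<forall>m<n. \<exists>k. eval f (prod_encode (x, m)) (Suc k)) \<Longrightarrow>
   eval (Mu f) x n"

text \<open>A (promise) decision problem: on every valid instance x (V x) the
algorithm halts with output 1 if P x holds and 0 otherwise.\<close>

definition decidable_on :: "(nat \<Rightarrow> bool) \<Rightarrow> (nat \<Rightarrow> bool) \<Rightarrow> bool" where
  "decidable_on V P \<longleftrightarrow> (\<exists>f. \<forall>x. V x \<longrightarrow> eval f x (if P x then 1 else 0))"

text \<open>Letters of the alphabet A \<union> A^-1 for A = set gens are natural numbers: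
2i stands for gens!i and 2i+1 for its inverse. Other letters are read as the
identity (a decidable convention that does not affect decidability).\<close>

definition gen_letter :: "('a, 'b) monoid_scheme \<Rightarrow> 'a list \<Rightarrow> nat \<Rightarrow> 'a" where
  "gen_letter G gens k =
     (if k < 2 * length gens
      then (if even k then gens ! (k div 2) else inv\<^bsub>G\<^esub> (gens ! (k div 2)))
      else \<one>\<^bsub>G\<^esub>)"

definition word_val :: "('a, 'b) monoid_scheme \<Rightarrow> 'a list \<Rightarrow> nat list \<Rightarrow> 'a" where
  "word_val G gens w = foldr (\<lambda>k acc. gen_letter G gens k \<otimes>\<^bsub>G\<^esub> acc) w \<one>\<^bsub>G\<^esub>"

definition subgrp_of_words :: "('a, 'b) monoid_scheme \<Rightarrow> 'a list \<Rightarrow> nat list list \<Rightarrow> 'a set" where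
  "subgrp_of_words G gens hs = generate G (word_val G gens ` set hs)"

definition finite_index :: "('a, 'b) monoid_scheme \<Rightarrow> 'a set \<Rightarrow> bool" where
  "finite_index G H \<longleftrightarrow> finite (rcosets\<^bsub>G\<^esub> H)"

definition dec_words :: "nat \<Rightarrow> nat list list" where
  "dec_words n = map list_decode (list_decode n)"

text \<open>MP_fi instance: n codes the pair (word for g, list of generating words of H).\<close>

definition MPfi_valid :: "('a, 'b) monoid_scheme \<Rightarrow> 'a list \<Rightarrow> nat \<Rightarrow> bool" where
  "MPfi_valid G gens n \<longleftrightarrow>
     finite_index G (subgrp_of_words G gens (dec_words (snd (prod_decode n))))"

definition MPfi_yes :: "('a, 'b) monoid_scheme \<Rightarrow> 'a list \<Rightarrow> nat \<Rightarrow> bool" where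
  "MPfi_yes G gens n \<longleftrightarrow>
     word_val G gens (list_decode (fst (prod_decode n)))
       \<in> subgrp_of_words G gens (dec_words (snd (prod_decode n)))"

definition MPfi_decidable :: "('a, 'b) monoid_scheme \<Rightarrow> 'a list \<Rightarrow> bool" where
  "MPfi_decidable G gens \<longleftrightarrow> decidable_on (MPfi_valid G gens) (MPfi_yes G gens)"

text \<open>GCP_Rec instance: n codes (word for g, (generating words of H, words b_1..b_m)),
representing g and the recognizable set K = H b_1 \<union> ... \<union> H b_m.\<close>

definition rec_set :: "('a, 'b) monoid_scheme \<Rightarrow> 'a list \<Rightarrow> nat list list \<Rightarrow> nat list list \<Rightarrow> 'a set" where
  "rec_set G gens hs bs = (\<Union>b\<in>set bs. subgrp_of_words G gens hs #>\<^bsub>G\<^esub> word_val G gens b)"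

definition GCPRec_valid :: "('a, 'b) monoid_scheme \<Rightarrow> 'a list \<Rightarrow> nat \<Rightarrow> bool" where
  "GCPRec_valid G gens n \<longleftrightarrow>
     finite_index G (subgrp_of_words G gens (dec_words (fst (prod_decode (snd (prod_decode n))))))"

definition GCPRec_yes :: "('a, 'b) monoid_scheme \<Rightarrow> 'a list \<Rightarrow> nat \<Rightarrow> bool" where
  "GCPRec_yes G gens n \<longleftrightarrow>
     (let g = word_val G gens (list_decode (fst (prod_decode n)));
          hs = dec_words (fst (prod_decode (snd (prod_decode n))));
          bs = dec_words (snd (prod_decode (snd (prod_decode n))))
      in \<exists>x\<in>carrier G. x \<otimes>\<^bsub>G\<^esub> g \<otimes>\<^bsub>G\<^esub> inv\<^bsub>G\<^esub> x \<in> rec_set G gens hs bs)"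

definition GCPRec_decidable :: "('a, 'b) monoid_scheme \<Rightarrow> 'a list \<Rightarrow> bool" where
  "GCPRec_decidable G gens \<longleftrightarrow> decidable_on (GCPRec_valid G gens) (GCPRec_yes G gens)"

end

theory Submission
  imports Defs
begin


definition p1 :: "nat \<Rightarrow> nat" where "p1 x = fst (prod_decode x)"
definition p2 :: "nat \<Rightarrow> nat" where "p2 x = snd (prod_decode x)"
definition pe :: "nat \<Rightarrow> nat \<Rightarrow> nat" where "pe a b = prod_encode (a, b)"

lemma p1_pe[simp]: "p1 (pe a b) = a" and p2_pe[simp]: "p2 (pe a b) = b"
  by (simp_all add: p1_def p2_def pe_def prod_encode_inverse)

lemma pe_p1_p2[simp]: "pe (p1 x) (p2 x) = x"
  by (simp add: p1_def p2_def pe_def prod_decode_inverse)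

definition cmp :: "(nat \<Rightarrow> bool) \<Rightarrow> (nat \<Rightarrow> nat) \<Rightarrow> bool" where
  "cmp P h \<longleftrightarrow> (\<exists>f. \<forall>x. P x \<longrightarrow> eval f x (h x))"

lemma ev_Fst: "y = p1 x \<Longrightarrow> eval Fst x y" using eval.intros(4) by (simp add: p1_def)
lemma ev_Snd: "y = p2 x \<Longrightarrow> eval Snd x y" using eval.intros(5) by (simp add: p2_def)
lemma ev_Pair: "eval f x y \<Longrightarrow> eval g x z \<Longrightarrow> eval (Pair f g) x (pe y z)"
  using eval.intros(7) by (simp add: pe_def)
lemma ev_Prec0: "eval f x y \<Longrightarrow> eval (Prec f g) (pe x 0) y"
  using eval.intros(8) by (simp add: pe_def)
lemma ev_PrecS: "eval (Prec f g) (pe x n) y \<Longrightarrow> eval g (pe x (pe n y)) z \<Longrightarrow> eval (Prec f g) (pe x (Suc n)) z"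
  using eval.intros(9) by (simp add: pe_def)
lemma ev_Mu: "eval f (pe x n) 0 \<Longrightarrow> (\<forall>m<n. \<exists>k. eval f (pe x m) (Suc k)) \<Longrightarrow> eval (Mu f) x n"
  using eval.intros(10) by (simp add: pe_def)
lemmas ev_Comp = eval.intros(6)

lemma cmp_mono: "cmp P h \<Longrightarrow> (\<And>x. Q x \<Longrightarrow> P x) \<Longrightarrow> cmp Q h"
  unfolding cmp_def by blast

lemma cmp_id: "cmp P (\<lambda>z. z)"
  unfolding cmp_def using eval.intros(3) by blast

lemma cmp_const: "cmp P (\<lambda>z. k)"
proof (induction k)
  case 0 then show ?case unfolding cmp_def using eval.intros(1) by blast
next
  case (Suc k)
  then obtain f where "\<forall>x. P x \<longrightarrow> eval f x k" unfolding cmp_def by blast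
  then have "\<forall>x. P x \<longrightarrow> eval (Comp Succ f) x (Suc k)" using ev_Comp eval.intros(2) by blast
  then show ?case unfolding cmp_def by blast
qed

lemma cmp_o: "cmp Q g \<Longrightarrow> cmp P f \<Longrightarrow> (\<And>z. P z \<Longrightarrow> Q (f z)) \<Longrightarrow> cmp P (\<lambda>z. g (f z))"
  unfolding cmp_def using ev_Comp by blast

lemma cmp_tot: "cmp (\<lambda>_. True) g \<Longrightarrow> cmp P f \<Longrightarrow> cmp P (\<lambda>z. g (f z))"
  by (rule cmp_o) auto

lemma cmp_p1: "cmp P f \<Longrightarrow> cmp P (\<lambda>z. p1 (f z))"
  by (rule cmp_tot[where g=p1]) (auto simp: cmp_def intro: ev_Fst)
lemma cmp_p2: "cmp P f \<Longrightarrow> cmp P (\<lambda>z. p2 (f z))"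
  by (rule cmp_tot[where g=p2]) (auto simp: cmp_def intro: ev_Snd)
lemma cmp_Suc: "cmp P f \<Longrightarrow> cmp P (\<lambda>z. Suc (f z))"
  by (rule cmp_tot[where g=Suc]) (auto simp: cmp_def intro: eval.intros(2))

lemma cmp_pe: "cmp P f \<Longrightarrow> cmp P g \<Longrightarrow> cmp P (\<lambda>z. pe (f z) (g z))"
  unfolding cmp_def using ev_Pair by blast

lemma cmp_iter:
  assumes "cmp Q s" "\<And>x. Q x \<Longrightarrow> Q (s x)"
  shows "cmp (\<lambda>y. Q (p1 y)) (\<lambda>y. (s ^^ p2 y) (p1 y))"
proof -
  obtain f where f: "\<And>x. Q x \<Longrightarrow> eval f x (s x)" using assms(1) unfolding cmp_def by blast
  have inv: "Q ((s ^^ n) x)" if "Q x" for n x using that by (induction n) (auto intro: assms(2))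
  have "eval (Prec Ident (Comp f (Comp Snd Snd))) (pe x n) ((s ^^ n) x)" if "Q x" for x n
  proof (induction n)
    case 0 then show ?case by (auto intro: ev_Prec0 eval.intros(3))
  next
    case (Suc n)
    show ?case
      apply (rule ev_PrecS[OF Suc])
      apply (rule ev_Comp[where y="(s ^^ n) x"])
       apply (rule ev_Comp[where y="pe n ((s ^^ n) x)"])
        apply (auto intro!: ev_Snd f inv that)
      done
  qed
  then show ?thesis unfolding cmp_def
    by (metis pe_p1_p2)
qed

lemma cmp_if: "cmp P c \<Longrightarrow> cmp P a \<Longrightarrow> cmp P b \<Longrightarrow> cmp P (\<lambda>z. if c z = 0 then a z else b z)"
proof -
  assume "cmp P c" "cmp P a" "cmp P b"
  then obtain fc fa fb where c: "\<And>x. P x \<Longrightarrow> eval fc x (c x)" and a: "\<And>x. P x \<Longrightarrow> eval fa x (a x)"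
    and b: "\<And>x. P x \<Longrightarrow> eval fb x (b x)" unfolding cmp_def by metis
  have "eval (Prec fa (Comp fb Fst)) (pe x n) (if n = 0 then a x else b x)" if "P x" for x n
  proof (induction n)
    case 0 then show ?case using a[OF that] by (auto intro: ev_Prec0)
  next
    case (Suc n)
    have "eval (Comp fb Fst) (pe x (pe n (if n = 0 then a x else b x))) (b x)"
      by (rule ev_Comp[OF ev_Fst b[OF that]]) simp
    then show ?case using ev_PrecS[OF Suc] by simp
  qed
  then have "eval (Comp (Prec fa (Comp fb Fst)) (Pair Ident fc)) x (if c x = 0 then a x else b x)" if "P x" for x
    using that by (meson c ev_Comp ev_Pair eval.intros(3))
  then show ?thesis unfolding cmp_def by blast
qed

lemma cmp_pred: "cmp P f \<Longrightarrow> cmp P (\<lambda>z. f z - 1)"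
proof -
  have "eval (Prec Zero (Comp Fst Snd)) (pe x n) (n - 1)" for x n
  proof (cases n)
    case 0 then show ?thesis by (auto intro: ev_Prec0 eval.intros(1))
  next
    case (Suc m)
    have "eval (Prec Zero (Comp Fst Snd)) (pe x m) (m - 1)"
    proof (induction m)
      case 0 then show ?case by (auto intro: ev_Prec0 eval.intros(1))
    next
      case (Suc m)
      show ?case by (rule ev_PrecS[OF Suc]) (auto intro!: ev_Comp[OF ev_Snd ev_Fst])
    qed
    then show ?thesis using Suc by (auto intro!: ev_PrecS ev_Comp[OF ev_Snd ev_Fst])
  qed
  then have "eval (Comp (Prec Zero (Comp Fst Snd)) (Pair Zero Ident)) n (n - 1)" for n
    by (meson ev_Comp ev_Pair eval.intros(1,3))
  then have "cmp (\<lambda>_. True) (\<lambda>n. n - 1)" unfolding cmp_def by blast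
  then show "cmp P f \<Longrightarrow> cmp P (\<lambda>z. f z - 1)" by (rule cmp_tot)
qed

lemma cmp_Least:
  assumes "cmp (\<lambda>y. P (p1 y)) h" "\<And>z. P z \<Longrightarrow> \<exists>n. h (pe z n) = 0"
  shows "cmp P (\<lambda>z. LEAST n. h (pe z n) = 0)"
proof -
  obtain f where f: "\<And>y. P (p1 y) \<Longrightarrow> eval f y (h y)" using assms(1) unfolding cmp_def by blast
  have "eval (Mu f) z (LEAST n. h (pe z n) = 0)" if "P z" for z
  proof (rule ev_Mu)
    show "eval f (pe z (LEAST n. h (pe z n) = 0)) 0"
      using f[of "pe z (LEAST n. h (pe z n) = 0)"] that LeastI_ex[OF assms(2)[OF that]] by simp
    show "\<forall>m<(LEAST n. h (pe z n) = 0). \<exists>k. eval f (pe z m) (Suc k)"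
    proof (intro allI impI)
      fix m assume "m < (LEAST n. h (pe z n) = 0)"
      then have "h (pe z m) \<noteq> 0" using not_less_Least by blast
      then obtain k where "h (pe z m) = Suc k" using not0_implies_Suc by blast
      then show "\<exists>k. eval f (pe z m) (Suc k)" using f[of "pe z m"] that by auto
    qed
  qed
  then show ?thesis unfolding cmp_def by blast
qed




definition hdc :: "nat \<Rightarrow> nat" where "hdc c = p1 (c - 1)"
definition tlc :: "nat \<Rightarrow> nat" where "tlc c = p2 (c - 1)"
definition consc :: "nat \<Rightarrow> nat \<Rightarrow> nat" where "consc h t = Suc (pe h t)"

lemma list_decode_consc[simp]: "list_decode (consc h t) = h # list_decode t"
  by (simp add: consc_def pe_def prod_encode_inverse)

lemma list_decode_nz: "c \<noteq> 0 \<Longrightarrow> list_decode c = hdc c # list_decode (tlc c)"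
  by (cases c) (auto simp: hdc_def tlc_def p1_def p2_def split: prod.split)

lemma length_list_decode_le: "length (list_decode c) \<le> c"
proof (induction c rule: list_decode.induct)
  case 1 then show ?case by simp
next
  case (2 n)
  obtain x y where xy: "prod_decode n = (x, y)" by (cases "prod_decode n")
  have "n = prod_encode (x, y)" using xy by (metis prod_decode_inverse)
  then have "y \<le> n" using le_prod_encode_2 by simp
  then show ?case using 2[OF xy[symmetric]] xy by simp
qed

lemma cmp_consc: "cmp P f \<Longrightarrow> cmp P g \<Longrightarrow> cmp P (\<lambda>z. consc (f z) (g z))"
  unfolding consc_def by (intro cmp_Suc cmp_pe)
lemma cmp_hdc: "cmp P f \<Longrightarrow> cmp P (\<lambda>z. hdc (f z))"
  unfolding hdc_def by (intro cmp_p1 cmp_pred)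
lemma cmp_tlc: "cmp P f \<Longrightarrow> cmp P (\<lambda>z. tlc (f z))"
  unfolding tlc_def by (intro cmp_p2 cmp_pred)

definition foldc :: "(nat \<Rightarrow> nat) \<Rightarrow> nat \<Rightarrow> nat \<Rightarrow> nat \<Rightarrow> nat" where
  "foldc q z l a = foldl (\<lambda>acc e. q (pe z (pe e acc))) a (list_decode l)"

lemma funpow_fix: "s x = x \<Longrightarrow> (s ^^ n) x = x"
  by (induction n) auto

lemma cmp_foldc_gen:
  assumes q: "cmp (\<lambda>y. Q (p1 y)) q" and L: "cmp P L" and A: "cmp P A" and Z: "cmp P Z"
   and PQ: "\<And>z. P z \<Longrightarrow> Q (Z z)"
  shows "cmp P (\<lambda>z. foldc q (Z z) (L z) (A z))"
proof -
  define step where "step s = (if p1 (p2 s) = 0 then s else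
     pe (p1 s) (pe (tlc (p1 (p2 s))) (q (pe (p1 s) (pe (hdc (p1 (p2 s))) (p2 (p2 s)))))))" for s
  have cs: "cmp (\<lambda>s. Q (p1 s)) step"
    unfolding step_def
    apply (intro cmp_if cmp_p1 cmp_p2 cmp_id cmp_pe cmp_tlc)
    apply (rule cmp_o[OF q])
     apply (intro cmp_pe cmp_p1 cmp_p2 cmp_id cmp_hdc)
    apply simp
    done
  have inv: "Q (p1 (step s))" if "Q (p1 s)" for s using that by (simp add: step_def)
  have it: "(step ^^ n) (pe z (pe l a)) = pe z (pe 0 (foldc q z l a))" if "length (list_decode l) \<le> n" for n l a z
    using that
  proof (induction n arbitrary: l a)
    case 0
    then have "l = 0" by (metis le_zero_eq length_0_conv list_decode_inverse list_encode.simps(1))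
    then show ?case by (simp add: foldc_def)
  next
    case (Suc n)
    show ?case
    proof (cases "l = 0")
      case True then show ?thesis by (simp add: funpow_fix step_def foldc_def)
    next
      case False
      have "step (pe z (pe l a)) = pe z (pe (tlc l) (q (pe z (pe (hdc l) a))))"
        using False by (simp add: step_def)
      moreover have "length (list_decode (tlc l)) \<le> n"
        using Suc.prems list_decode_nz[OF False] by simp
      ultimately show ?thesis using Suc.IH list_decode_nz[OF False]
        by (simp add: funpow_Suc_right foldc_def del: funpow.simps)
    qed
  qed
  have "cmp P (\<lambda>z. p2 (p2 ((step ^^ p2 (pe (pe (Z z) (pe (L z) (A z))) (L z))) (p1 (pe (pe (Z z) (pe (L z) (A z))) (L z))))))"
    apply (intro cmp_p2)
    apply (rule cmp_o[OF cmp_iter[OF cs]])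
      apply (simp add: inv)
     apply (intro cmp_pe cmp_id L A Z)
    apply (simp add: PQ)
    done
  moreover have "p2 (p2 ((step ^^ p2 (pe (pe (Z z) (pe (L z) (A z))) (L z))) (p1 (pe (pe (Z z) (pe (L z) (A z))) (L z)))))
     = foldc q (Z z) (L z) (A z)" for z
    unfolding p1_pe p2_pe it[where n="L z" and l="L z" and a="A z" and z="Z z", OF length_list_decode_le] by (simp only: p2_pe)
  ultimately show ?thesis by simp
qed

lemma cmp_foldc:
  assumes q: "cmp (\<lambda>y. P (p1 y)) q" and L: "cmp P L" and A: "cmp P A"
  shows "cmp P (\<lambda>z. foldc q z (L z) (A z))"
  by (rule cmp_foldc_gen[OF q L A cmp_id])

lemma cmp_foldc_tot:
  assumes "cmp (\<lambda>_. True) q" "cmp P Z" "cmp P L" "cmp P A"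
  shows "cmp P (\<lambda>z. foldc q (Z z) (L z) (A z))"
  by (rule cmp_foldc_gen[where Q="\<lambda>_. True"]) (auto intro: cmp_mono[OF assms(1)] assms)

lemmas cmp_basic = cmp_id cmp_const cmp_p1 cmp_p2 cmp_Suc cmp_pe cmp_pred cmp_if cmp_consc cmp_hdc cmp_tlc

definition consq :: "nat \<Rightarrow> nat" where "consq y = consc (p1 (p2 y)) (p2 (p2 y))"

lemma cmp_consq: "cmp P consq" unfolding consq_def by (intro cmp_basic)

lemma foldl_consq: "list_decode (foldl (\<lambda>acc e. consq (pe z (pe e acc))) a xs) = rev xs @ list_decode a"
  by (induction xs arbitrary: a) (auto simp: consq_def)

definition revc :: "nat \<Rightarrow> nat" where "revc l = foldc consq l l 0"
definition appc :: "nat \<Rightarrow> nat \<Rightarrow> nat" where "appc l1 l2 = foldc consq l1 (revc l1) l2"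

lemma revc_dec[simp]: "list_decode (revc l) = rev (list_decode l)"
  by (simp add: revc_def foldc_def foldl_consq)
lemma appc_dec[simp]: "list_decode (appc l1 l2) = list_decode l1 @ list_decode l2"
  by (simp add: appc_def foldc_def foldl_consq)

lemma cmp_revc: "cmp P f \<Longrightarrow> cmp P (\<lambda>z. revc (f z))"
  apply (rule cmp_tot[where g=revc])
  unfolding revc_def
   apply (intro cmp_foldc cmp_consq cmp_basic)
  apply assumption
  done

lemma cmp_appc: "cmp P f \<Longrightarrow> cmp P g \<Longrightarrow> cmp P (\<lambda>z. appc (f z) (g z))"
  unfolding appc_def by (intro cmp_foldc_tot cmp_consq cmp_revc; assumption)

definition par :: "nat \<Rightarrow> nat" where "par k = ((\<lambda>y::nat. if y = 0 then 1 else 0) ^^ k) 0"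

lemma par_eq: "par k = (if even k then 0 else 1)"
  unfolding par_def by (induction k) auto

lemma cmp_par: "cmp P f \<Longrightarrow> cmp P (\<lambda>z. par (f z))"
proof (rule cmp_tot[where g=par])
  have "cmp (\<lambda>y. True) (\<lambda>y. ((\<lambda>y. if y = 0 then 1 else 0) ^^ p2 y) (p1 y))"
    using cmp_iter[of "\<lambda>_. True" "\<lambda>y. if y = 0 then 1 else 0"] by (simp add: cmp_basic)
  then have "cmp (\<lambda>y. True) (\<lambda>k. ((\<lambda>y. if y = 0 then 1 else 0) ^^ p2 (pe 0 k)) (p1 (pe 0 k)))"
    by (rule cmp_o) (auto intro: cmp_basic)
  then show "cmp (\<lambda>_. True) par" by (simp add: par_def[abs_def])
qed

definition linv :: "nat \<Rightarrow> nat" where "linv k = (if par k = 0 then Suc k else k - 1)"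

lemma cmp_linv: "cmp P f \<Longrightarrow> cmp P (\<lambda>z. linv (f z))"
  unfolding linv_def by (intro cmp_basic cmp_par)

definition invq :: "nat \<Rightarrow> nat" where "invq y = consc (linv (p1 (p2 y))) (p2 (p2 y))"
definition invc :: "nat \<Rightarrow> nat" where "invc l = foldc invq l l 0"

lemma foldl_invq: "list_decode (foldl (\<lambda>acc e. invq (pe z (pe e acc))) a xs) = rev (map linv xs) @ list_decode a"
  by (induction xs arbitrary: a) (auto simp: invq_def)

lemma invc_dec[simp]: "list_decode (invc l) = rev (map linv (list_decode l))"
  by (simp add: invc_def foldc_def foldl_invq)

lemma cmp_invc: "cmp P f \<Longrightarrow> cmp P (\<lambda>z. invc (f z))"
  apply (rule cmp_tot[where g=invc])
  unfolding invc_def invq_def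
   apply (intro cmp_foldc cmp_linv cmp_basic)
  apply assumption
  done

definition ballc :: "(nat \<Rightarrow> nat) \<Rightarrow> nat \<Rightarrow> nat \<Rightarrow> nat" where
  "ballc q z l = (if \<forall>e\<in>set (list_decode l). q (pe z e) \<noteq> 0 then 1 else 0)"
definition bexc :: "(nat \<Rightarrow> nat) \<Rightarrow> nat \<Rightarrow> nat \<Rightarrow> nat" where
  "bexc q z l = (if \<exists>e\<in>set (list_decode l). q (pe z e) \<noteq> 0 then 1 else 0)"

lemma foldl_ball: "foldl (\<lambda>acc e. (if acc = 0 then 0 else if q (pe z e) = 0 then 0 else 1)) a xs
   = (if a \<noteq> 0 \<and> (\<forall>e\<in>set xs. q (pe z e) \<noteq> 0) then (if xs = [] then a else 1) else 0)"
  by (induction xs arbitrary: a) auto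

lemma foldl_bex: "foldl (\<lambda>acc e. (if acc = 0 then (if q (pe z e) = 0 then 0 else 1) else 1)) a xs
   = (if a \<noteq> 0 \<or> (\<exists>e\<in>set xs. q (pe z e) \<noteq> 0) then (if xs = [] then a else 1) else 0)"
  by (induction xs arbitrary: a) auto

lemma cmp_ballc: "cmp (\<lambda>y. P (p1 y)) q \<Longrightarrow> cmp P L \<Longrightarrow> cmp P (\<lambda>z. ballc q z (L z))"
proof -
  assume q: "cmp (\<lambda>y. P (p1 y)) q" and L: "cmp P L"
  have "cmp P (\<lambda>z. foldc (\<lambda>y. if p2 (p2 y) = 0 then 0 else if q (pe (p1 y) (p1 (p2 y))) = 0 then 0 else 1) z (L z) 1)"
    apply (intro cmp_foldc cmp_basic L)
    apply (rule cmp_o[OF q])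
     apply (intro cmp_basic)
    apply simp
    done
  moreover have "foldc (\<lambda>y. if p2 (p2 y) = 0 then 0 else if q (pe (p1 y) (p1 (p2 y))) = 0 then 0 else 1) z l 1 = ballc q z l" for z l
    unfolding foldc_def ballc_def p1_pe p2_pe foldl_ball by simp
  ultimately show ?thesis by simp
qed

lemma cmp_bexc: "cmp (\<lambda>y. P (p1 y)) q \<Longrightarrow> cmp P L \<Longrightarrow> cmp P (\<lambda>z. bexc q z (L z))"
proof -
  assume q: "cmp (\<lambda>y. P (p1 y)) q" and L: "cmp P L"
  have "cmp P (\<lambda>z. foldc (\<lambda>y. if p2 (p2 y) = 0 then (if q (pe (p1 y) (p1 (p2 y))) = 0 then 0 else 1) else 1) z (L z) 0)"
    apply (intro cmp_foldc cmp_basic L)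
    apply (rule cmp_o[OF q])
     apply (intro cmp_basic)
    apply simp
    done
  moreover have "foldc (\<lambda>y. if p2 (p2 y) = 0 then (if q (pe (p1 y) (p1 (p2 y))) = 0 then 0 else 1) else 1) z l 0 = bexc q z l" for z l
    unfolding foldc_def bexc_def p1_pe p2_pe foldl_bex by simp
  ultimately show ?thesis by simp
qed




context group begin

lemma gens_nth_carrier: "set gens \<subseteq> carrier G \<Longrightarrow> k < 2 * length gens \<Longrightarrow> gens ! (k div 2) \<in> carrier G"
proof -
  assume "set gens \<subseteq> carrier G" "k < 2 * length gens"
  moreover have "k div 2 < length gens" using \<open>k < 2 * length gens\<close> by linarith
  ultimately show ?thesis using nth_mem by blast
qed

lemma gen_letter_carrier: "set gens \<subseteq> carrier G \<Longrightarrow> gen_letter G gens k \<in> carrier G"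
  unfolding gen_letter_def by (auto intro: gens_nth_carrier)

lemma word_val_carrier: "set gens \<subseteq> carrier G \<Longrightarrow> word_val G gens w \<in> carrier G"
  unfolding word_val_def by (induction w) (auto intro: gen_letter_carrier)

lemma word_val_Nil[simp]: "word_val G gens [] = \<one>" by (simp add: word_val_def)
lemma word_val_Cons: "word_val G gens (a # w) = gen_letter G gens a \<otimes> word_val G gens w"
  by (simp add: word_val_def)

lemma word_val_append: "set gens \<subseteq> carrier G \<Longrightarrow>
   word_val G gens (u @ v) = word_val G gens u \<otimes> word_val G gens v"
  by (induction u) (auto simp: word_val_Cons m_assoc gen_letter_carrier word_val_carrier)

lemma word_val_single: "set gens \<subseteq> carrier G \<Longrightarrow> word_val G gens [a] = gen_letter G gens a"
  by (simp add: word_val_Cons gen_letter_carrier)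

lemma gen_letter_linv: "set gens \<subseteq> carrier G \<Longrightarrow> gen_letter G gens (linv k) = inv gen_letter G gens k"
proof -
  assume gs: "set gens \<subseteq> carrier G"
  show ?thesis
  proof (cases "even k")
    case True
    then have l: "linv k = Suc k" by (simp add: linv_def par_eq)
    have "Suc k div 2 = k div 2" using True by presburger
    moreover have "Suc k < 2 * length gens \<longleftrightarrow> k < 2 * length gens" using True by presburger
    ultimately show ?thesis using True l unfolding gen_letter_def by auto
  next
    case False
    then have l: "linv k = k - 1" by (simp add: linv_def par_eq)
    have "(k - 1) div 2 = k div 2" using False by presburger
    moreover have "k - 1 < 2 * length gens \<longleftrightarrow> k < 2 * length gens" using False by presburger
    moreover have "even (k - 1)" using False by presburger
    moreover have "k div 2 < length gens" if "k < 2 * length gens" using that by linarith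
    ultimately show ?thesis using False l gs gens_nth_carrier[OF gs, of k] unfolding gen_letter_def by auto
  qed
qed

lemma word_val_inv: "set gens \<subseteq> carrier G \<Longrightarrow>
   word_val G gens (rev (map linv w)) = inv (word_val G gens w)"
  by (induction w) (auto simp: word_val_append word_val_single gen_letter_linv word_val_Cons
      inv_mult_group gen_letter_carrier word_val_carrier)

lemma word_exists:
  assumes gs: "set gens \<subseteq> carrier G" and x: "x \<in> generate G (set gens)"
  shows "\<exists>w. word_val G gens w = x"
  using x
proof (induction rule: generate.induct)
  case one then show ?case by (rule exI[of _ "[]"]) simp
next
  case (incl h)
  then obtain i where i: "i < length gens" "h = gens ! i" by (metis in_set_conv_nth)
  have "gen_letter G gens (2 * i) = h" using i unfolding gen_letter_def by auto
  then show ?case using gs by (metis word_val_single)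
next
  case (inv h)
  then obtain i where i: "i < length gens" "h = gens ! i" by (metis in_set_conv_nth)
  have "gen_letter G gens (2 * i + 1) = inv h" using i unfolding gen_letter_def by auto
  then show ?case using gs by (metis word_val_single)
next
  case (eng h1 h2)
  then obtain w1 w2 where "word_val G gens w1 = h1" "word_val G gens w2 = h2" by blast
  then show ?case using gs by (metis word_val_append)
qed

lemma coset_eq_iff:
  assumes "subgroup H G" "y \<in> carrier G" "z \<in> carrier G"
  shows "(y \<otimes> inv z \<in> H) = (H #> y = H #> z)"
  using assms subgroup.rcos_module[OF assms(1) is_group assms(3,2)]
  by (metis repr_independence repr_independenceD)

lemma closure_all:
  assumes gs: "set gens \<subseteq> carrier G" and gen: "generate G (set gens) = carrier G"
    and H: "subgroup H G"
    and Ds: "Ds \<subseteq> carrier G" "\<one> \<in> Ds" and Bs: "Bs \<subseteq> carrier G"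
    and cl: "\<forall>d\<in>Ds. \<forall>a<2 * length gens. \<exists>d'\<in>Ds. \<forall>b\<in>Bs. H #> (b \<otimes> d \<otimes> gen_letter G gens a) = H #> (b \<otimes> d')"
    and x: "x \<in> carrier G"
  shows "\<exists>d\<in>Ds. \<forall>b\<in>Bs. H #> (b \<otimes> x) = H #> (b \<otimes> d)"
proof -
  have Hc: "H \<subseteq> carrier G" using H subgroup.subset by blast
  have "\<exists>d\<in>Ds. \<forall>b\<in>Bs. H #> (b \<otimes> word_val G gens w) = H #> (b \<otimes> d)" for w
  proof (induction w rule: rev_induct)
    case Nil then show ?case using Ds Bs by (intro bexI[of _ \<one>]) auto
  next
    case (snoc a w)
    then obtain d where d: "d \<in> Ds" "\<forall>b\<in>Bs. H #> (b \<otimes> word_val G gens w) = H #> (b \<otimes> d)" by blast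
    let ?l = "gen_letter G gens a"
    have wa: "word_val G gens (w @ [a]) = word_val G gens w \<otimes> ?l"
      using gs by (simp add: word_val_append word_val_single)
    have eq1: "H #> (b \<otimes> word_val G gens (w @ [a])) = H #> (b \<otimes> d \<otimes> ?l)" if "b \<in> Bs" for b
    proof -
      have bc: "b \<in> carrier G" using that Bs by blast
      have "H #> (b \<otimes> word_val G gens (w @ [a])) = (H #> (b \<otimes> word_val G gens w)) #> ?l"
        using wa bc gs Hc by (simp add: coset_mult_assoc m_assoc word_val_carrier gen_letter_carrier)
      also have "\<dots> = (H #> (b \<otimes> d)) #> ?l" using d that by simp
      also have "\<dots> = H #> (b \<otimes> d \<otimes> ?l)"
        using bc gs Hc d Ds by (simp add: coset_mult_assoc gen_letter_carrier subset_iff)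
      finally show ?thesis .
    qed
    show ?case
    proof (cases "a < 2 * length gens")
      case True
      then obtain d' where "d' \<in> Ds" "\<forall>b\<in>Bs. H #> (b \<otimes> d \<otimes> ?l) = H #> (b \<otimes> d')"
        using cl d by blast
      then show ?thesis using eq1 by auto
    next
      case False
      then have "?l = \<one>" by (simp add: gen_letter_def)
      then show ?thesis using eq1 d Bs Ds by (auto intro!: bexI[of _ d] simp: subset_iff)
    qed
  qed
  moreover obtain w where "word_val G gens w = x" using word_exists[OF gs] x gen by blast
  ultimately show ?thesis by blast
qed

lemma answer_equiv:
  assumes H: "subgroup H G" and Ds: "Ds \<subseteq> carrier G" and Bs: "Bs \<subseteq> carrier G" "\<one> \<in> Bs"
    and B: "B \<subseteq> Bs" and g: "g \<in> carrier G"
    and cov: "\<And>x. x \<in> carrier G \<Longrightarrow> \<exists>d\<in>Ds. \<forall>b\<in>Bs. H #> (b \<otimes> x) = H #> (b \<otimes> d)"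
  shows "(\<exists>x\<in>carrier G. \<exists>b\<in>B. x \<otimes> g \<otimes> inv x \<in> H #> b) \<longleftrightarrow> (\<exists>d\<in>Ds. \<exists>b\<in>B. d \<otimes> g \<otimes> inv d \<in> H #> b)"
proof -
  have Hc: "H \<subseteq> carrier G" using H subgroup.subset by blast
  have key: "(x \<otimes> g \<otimes> inv x \<in> H #> b) = (H #> (x \<otimes> g) = H #> (b \<otimes> x))"
    if "x \<in> carrier G" "b \<in> carrier G" for x b
  proof -
    have "(x \<otimes> g \<otimes> inv x \<in> H #> b) = (x \<otimes> g \<otimes> inv x \<otimes> inv b \<in> H)"
      using subgroup.rcos_module[OF H is_group] that g by simp
    also have "x \<otimes> g \<otimes> inv x \<otimes> inv b = (x \<otimes> g) \<otimes> inv (b \<otimes> x)"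
      using that g by (simp add: inv_mult_group m_assoc)
    also have "((x \<otimes> g) \<otimes> inv (b \<otimes> x) \<in> H) = (H #> (x \<otimes> g) = H #> (b \<otimes> x))"
      using coset_eq_iff[OF H] that g by simp
    finally show ?thesis .
  qed
  show ?thesis
  proof
    assume "\<exists>x\<in>carrier G. \<exists>b\<in>B. x \<otimes> g \<otimes> inv x \<in> H #> b"
    then obtain x b where xb: "x \<in> carrier G" "b \<in> B" "x \<otimes> g \<otimes> inv x \<in> H #> b" by blast
    obtain d where d: "d \<in> Ds" "\<forall>b\<in>Bs. H #> (b \<otimes> x) = H #> (b \<otimes> d)" using cov[OF xb(1)] by blast
    have bc: "b \<in> carrier G" "b \<in> Bs" using xb B Bs by auto
    have dc: "d \<in> carrier G" using d Ds by auto
    have e1: "H #> x = H #> d" using d(2) Bs xb(1) dc by (metis l_one)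
    have "H #> (d \<otimes> g) = H #> (x \<otimes> g)"
      using e1 Hc dc xb(1) g by (metis coset_mult_assoc)
    also have "\<dots> = H #> (b \<otimes> x)" using key xb bc by blast
    also have "\<dots> = H #> (b \<otimes> d)" using d bc by blast
    finally show "\<exists>d\<in>Ds. \<exists>b\<in>B. d \<otimes> g \<otimes> inv d \<in> H #> b" using key[OF dc bc(1)] d xb by blast
  next
    assume "\<exists>d\<in>Ds. \<exists>b\<in>B. d \<otimes> g \<otimes> inv d \<in> H #> b"
    then show "\<exists>x\<in>carrier G. \<exists>b\<in>B. x \<otimes> g \<otimes> inv x \<in> H #> b" using Ds by blast
  qed
qed

lemma cert_exists:
  assumes gs: "set gens \<subseteq> carrier G" and gen: "generate G (set gens) = carrier G"
    and H: "subgroup H G" and fin: "finite (rcosets H)" and Bl: "set Bl \<subseteq> carrier G"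
  shows "\<exists>Dw. \<forall>d\<in>insert \<one> (word_val G gens ` set Dw). \<forall>a<2 * length gens.
     \<exists>d'\<in>insert \<one> (word_val G gens ` set Dw). \<forall>b\<in>set Bl.
       H #> (b \<otimes> d \<otimes> gen_letter G gens a) = H #> (b \<otimes> d')"
proof -
  have Hc: "H \<subseteq> carrier G" using H subgroup.subset by blast
  define sig where "sig y = map (\<lambda>b. H #> (b \<otimes> y)) Bl" for y
  have "sig ` carrier G \<subseteq> {l. set l \<subseteq> rcosets H \<and> length l = length Bl}"
    using Bl Hc by (auto simp: sig_def intro!: rcosetsI m_closed)
  then have finS: "finite (sig ` carrier G)"
    using finite_subset finite_lists_length_eq[OF fin] by blast
  define ch where "ch s = (SOME w. sig (word_val G gens w) = s)" for s
  have ch: "sig (word_val G gens (ch s)) = s" if sS: "s \<in> sig ` carrier G" for s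
  proof -
    obtain y where y: "y \<in> carrier G" "s = sig y" using sS by blast
    have "y \<in> generate G (set gens)" using y gen by simp
    then obtain w where "word_val G gens w = y" using word_exists[OF gs] by blast
    then have "\<exists>w. sig (word_val G gens w) = s" using y by blast
    then show ?thesis unfolding ch_def by (rule someI_ex)
  qed
  have "finite (ch ` sig ` carrier G)" using finS by (rule finite_imageI)
  from finite_list[OF this] obtain Dw where Dw: "set Dw = ch ` sig ` carrier G" by (elim exE)
  show ?thesis
  proof (intro exI[of _ Dw] ballI allI impI)
    fix d a assume d: "d \<in> insert \<one> (word_val G gens ` set Dw)" and a: "a < 2 * length gens"
    have dc: "d \<in> carrier G" using d word_val_carrier[OF gs] by auto
    let ?y = "d \<otimes> gen_letter G gens a"
    have yc: "?y \<in> carrier G" using dc gen_letter_carrier[OF gs] by (rule m_closed)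
    let ?d' = "word_val G gens (ch (sig ?y))"
    have "ch (sig ?y) \<in> set Dw" unfolding Dw by (intro imageI yc)
    then have "?d' \<in> insert \<one> (word_val G gens ` set Dw)" by (intro insertI2 imageI)
    moreover have "\<forall>b\<in>set Bl. H #> (b \<otimes> d \<otimes> gen_letter G gens a) = H #> (b \<otimes> ?d')"
    proof
      fix b assume b: "b \<in> set Bl"
      have "sig ?d' = sig ?y" by (rule ch) (intro imageI yc)
      then have "map (\<lambda>b. H #> (b \<otimes> ?d')) Bl = map (\<lambda>b. H #> (b \<otimes> ?y)) Bl" by (simp add: sig_def)
      then have "H #> (b \<otimes> ?d') = H #> (b \<otimes> ?y)" using b by (simp only: map_eq_conv)
      then show "H #> (b \<otimes> d \<otimes> gen_letter G gens a) = H #> (b \<otimes> ?d')"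
        using b Bl dc gen_letter_carrier[OF gs] by (metis m_assoc subsetD)
    qed
    ultimately show "\<exists>d'\<in>insert \<one> (word_val G gens ` set Dw). \<forall>b\<in>set Bl.
       H #> (b \<otimes> d \<otimes> gen_letter G gens a) = H #> (b \<otimes> d')" by blast
  qed
qed

end




definition memc :: "('a, 'b) monoid_scheme \<Rightarrow> 'a list \<Rightarrow> nat \<Rightarrow> nat \<Rightarrow> nat" where
  "memc G gens w hc = (if MPfi_yes G gens (pe w hc) then 1 else 0)"

definition chk :: "('a, 'b) monoid_scheme \<Rightarrow> 'a list \<Rightarrow> nat \<Rightarrow> nat" where
  "chk G gens x0 =
    ballc (\<lambda>z1. ballc (\<lambda>z2. bexc (\<lambda>z3. ballc (\<lambda>z4.
       memc G gens (appc (p2 z4) (appc (p2 (p1 (p1 (p1 z4)))) (appc (consc (p2 (p1 (p1 z4))) 0)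
           (appc (invc (p2 (p1 z4))) (invc (p2 z4))))))
         (p1 (p2 (p1 (p1 (p1 (p1 (p1 z4))))))))
       z3 (consc 0 (p2 (p2 (p1 (p1 (p1 (p1 z3))))))))
       z2 (consc 0 (p2 (p1 (p1 z2)))))
       z1 (list_encode [0..<2 * length gens]))
     x0 (consc 0 (p2 x0))"

definition ans :: "('a, 'b) monoid_scheme \<Rightarrow> 'a list \<Rightarrow> nat \<Rightarrow> nat" where
  "ans G gens x0 =
    bexc (\<lambda>z1. bexc (\<lambda>z2.
       memc G gens (appc (p2 (p1 z2)) (appc (p1 (p1 (p1 (p1 z2)))) (appc (invc (p2 (p1 z2))) (invc (p2 z2)))))
         (p1 (p2 (p1 (p1 (p1 z2))))))
       z1 (p2 (p2 (p1 (p1 z1)))))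
     x0 (consc 0 (p2 x0))"

abbreviation wv :: "('a, 'b) monoid_scheme \<Rightarrow> 'a list \<Rightarrow> nat \<Rightarrow> 'a" where
  "wv G gens c \<equiv> word_val G gens (list_decode c)"

lemma MPfi_yes_pe: "MPfi_yes G gens (pe w hc) \<longleftrightarrow> word_val G gens (list_decode w) \<in> subgrp_of_words G gens (dec_words hc)"
  by (simp add: MPfi_yes_def pe_def prod_encode_inverse)

lemma if10: "((if P then (1::nat) else 0) \<noteq> 0) = P" by simp

lemma chk_sem: "chk G gens (pe x n) \<noteq> 0 \<longleftrightarrow>
  (\<forall>di\<in>set (0 # list_decode n). \<forall>a\<in>set [0..<2 * length gens]. \<exists>dk\<in>set (0 # list_decode n).
     \<forall>b\<in>set (0 # list_decode (p2 (p2 x))).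
       word_val G gens (list_decode b @ list_decode di @ [a] @ rev (map linv (list_decode dk)) @ rev (map linv (list_decode b)))
        \<in> subgrp_of_words G gens (dec_words (p1 (p2 x))))"
  unfolding chk_def ballc_def bexc_def memc_def
  by (simp only: if10 MPfi_yes_pe p1_pe p2_pe list_decode_consc appc_dec invc_dec list_encode_inverse append_assoc append.simps list_decode.simps(1))

lemma ans_sem: "ans G gens (pe x n) = (if
  (\<exists>di\<in>set (0 # list_decode n). \<exists>b\<in>set (list_decode (p2 (p2 x))).
       word_val G gens (list_decode di @ list_decode (p1 x) @ rev (map linv (list_decode di)) @ rev (map linv (list_decode b)))
        \<in> subgrp_of_words G gens (dec_words (p1 (p2 x)))) then 1 else 0)"
  unfolding ans_def bexc_def memc_def
  by (simp only: if10 MPfi_yes_pe p1_pe p2_pe list_decode_consc appc_dec invc_dec list_encode_inverse append_assoc append.simps list_decode.simps(1))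

context group begin

lemma subgrp_sub: "set gens \<subseteq> carrier G \<Longrightarrow> subgroup (subgrp_of_words G gens hs) G"
  unfolding subgrp_of_words_def by (rule generate_is_subgroup) (auto intro: word_val_carrier)

lemma mem_check_iff:
  assumes gs: "set gens \<subseteq> carrier G" and H: "subgroup H G"
  shows "word_val G gens (lb @ ld @ a # rev (map linv lk) @ rev (map linv lb)) \<in> H \<longleftrightarrow>
    H #> (word_val G gens lb \<otimes> word_val G gens ld \<otimes> gen_letter G gens a) = H #> (word_val G gens lb \<otimes> word_val G gens lk)"
proof -
  have "word_val G gens (lb @ ld @ a # rev (map linv lk) @ rev (map linv lb)) =
     (word_val G gens lb \<otimes> word_val G gens ld \<otimes> gen_letter G gens a) \<otimes> inv (word_val G gens lb \<otimes> word_val G gens lk)"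
    using gs by (simp add: word_val_append word_val_Cons word_val_inv m_assoc inv_mult_group word_val_carrier gen_letter_carrier)
  then show ?thesis using coset_eq_iff[OF H] gs by (simp add: word_val_carrier gen_letter_carrier)
qed

lemma mem_ans_iff:
  assumes gs: "set gens \<subseteq> carrier G" and H: "subgroup H G"
  shows "word_val G gens (ld @ lg @ rev (map linv ld) @ rev (map linv lb)) \<in> H \<longleftrightarrow>
    word_val G gens ld \<otimes> word_val G gens lg \<otimes> inv (word_val G gens ld) \<in> H #> word_val G gens lb"
proof -
  have "word_val G gens (ld @ lg @ rev (map linv ld) @ rev (map linv lb)) =
     (word_val G gens ld \<otimes> word_val G gens lg \<otimes> inv (word_val G gens ld)) \<otimes> inv (word_val G gens lb)"
    using gs by (simp add: word_val_append word_val_inv m_assoc word_val_carrier)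
  then show ?thesis using subgroup.rcos_module[OF H is_group] gs by (simp add: word_val_carrier)
qed

lemma chk_correct:
  assumes gs: "set gens \<subseteq> carrier G" and gen: "generate G (set gens) = carrier G"
    and c: "chk G gens (pe x n) \<noteq> 0"
  shows "ans G gens (pe x n) = (if GCPRec_yes G gens x then 1 else 0)"
proof -
  define H where "H = subgrp_of_words G gens (dec_words (p1 (p2 x)))"
  have H: "subgroup H G" unfolding H_def by (rule subgrp_sub[OF gs])
  define Ds where "Ds = wv G gens ` set (0 # list_decode n)"
  define Bs where "Bs = wv G gens ` set (0 # list_decode (p2 (p2 x)))"
  define B where "B = wv G gens ` set (list_decode (p2 (p2 x)))"
  have Dsc: "Ds \<subseteq> carrier G" and Bsc: "Bs \<subseteq> carrier G" and one: "\<one> \<in> Ds" "\<one> \<in> Bs" and BB: "B \<subseteq> Bs"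
    unfolding Ds_def Bs_def B_def using word_val_carrier[OF gs] by auto
  have cl: "\<forall>d\<in>Ds. \<forall>a<2 * length gens. \<exists>d'\<in>Ds. \<forall>b\<in>Bs. H #> (b \<otimes> d \<otimes> gen_letter G gens a) = H #> (b \<otimes> d')"
  proof (intro ballI allI impI)
    fix d a assume d: "d \<in> Ds" and a: "a < 2 * length gens"
    obtain di where di: "di \<in> set (0 # list_decode n)" "d = wv G gens di" using d Ds_def by blast
    have "a \<in> set [0..<2 * length gens]" using a by simp
    then obtain dk where dk: "dk \<in> set (0 # list_decode n)" and
      m: "\<forall>b\<in>set (0 # list_decode (p2 (p2 x))).
       word_val G gens (list_decode b @ list_decode di @ [a] @ rev (map linv (list_decode dk)) @ rev (map linv (list_decode b)))
        \<in> H" using c[unfolded chk_sem] di unfolding H_def by blast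
    show "\<exists>d'\<in>Ds. \<forall>b\<in>Bs. H #> (b \<otimes> d \<otimes> gen_letter G gens a) = H #> (b \<otimes> d')"
    proof (intro bexI[of _ "wv G gens dk"] ballI)
      fix b assume "b \<in> Bs"
      then obtain bc where bc: "bc \<in> set (0 # list_decode (p2 (p2 x)))" "b = wv G gens bc" using Bs_def by blast
      have mm: "word_val G gens (list_decode bc @ list_decode di @ [a] @ rev (map linv (list_decode dk)) @ rev (map linv (list_decode bc))) \<in> H"
        using m bc(1) by blast
      then show "H #> (b \<otimes> d \<otimes> gen_letter G gens a) = H #> (b \<otimes> wv G gens dk)"
        unfolding bc(2) di(2) using mem_check_iff[OF gs H] by (simp only: append.simps)
    next
      show "wv G gens dk \<in> Ds" using dk Ds_def by blast
    qed
  qed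
  have cov: "\<exists>d\<in>Ds. \<forall>b\<in>Bs. H #> (b \<otimes> y) = H #> (b \<otimes> d)" if "y \<in> carrier G" for y
    by (rule closure_all[OF gs gen H Dsc one(1) Bsc cl that])
  have gc: "wv G gens (p1 x) \<in> carrier G" using word_val_carrier[OF gs] .
  note eq = answer_equiv[OF H Dsc Bsc one(2) BB gc cov]
  have yes: "GCPRec_yes G gens x \<longleftrightarrow> (\<exists>y\<in>carrier G. \<exists>b\<in>B. y \<otimes> wv G gens (p1 x) \<otimes> inv y \<in> H #> b)"
    unfolding GCPRec_yes_def rec_set_def Let_def H_def B_def dec_words_def p1_def[symmetric] p2_def[symmetric]
    by auto
  have an: "ans G gens (pe x n) = (if (\<exists>d\<in>Ds. \<exists>b\<in>B. d \<otimes> wv G gens (p1 x) \<otimes> inv d \<in> H #> b) then 1 else 0)"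
    unfolding ans_sem Ds_def B_def H_def[symmetric] mem_ans_iff[OF gs H] by auto
  show ?thesis using an yes eq by simp
qed

lemma chk_exists:
  assumes gs: "set gens \<subseteq> carrier G" and gen: "generate G (set gens) = carrier G"
    and V: "finite_index G (subgrp_of_words G gens (dec_words (p1 (p2 x))))"
  shows "\<exists>n. chk G gens (pe x n) \<noteq> 0"
proof -
  define H where "H = subgrp_of_words G gens (dec_words (p1 (p2 x)))"
  have H: "subgroup H G" unfolding H_def by (rule subgrp_sub[OF gs])
  have fin: "finite (rcosets H)" using V unfolding H_def finite_index_def .
  define Bl where "Bl = map (wv G gens) (0 # list_decode (p2 (p2 x)))"
  have Bl: "set Bl \<subseteq> carrier G" unfolding Bl_def using word_val_carrier[OF gs] by auto
  obtain Dw where Dw: "\<forall>d\<in>insert \<one> (word_val G gens ` set Dw). \<forall>a<2 * length gens.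
     \<exists>d'\<in>insert \<one> (word_val G gens ` set Dw). \<forall>b\<in>set Bl.
       H #> (b \<otimes> d \<otimes> gen_letter G gens a) = H #> (b \<otimes> d')"
    using cert_exists[OF gs gen H fin Bl] by blast
  define n where "n = list_encode (map list_encode Dw)"
  have ld: "list_decode n = map list_encode Dw" unfolding n_def by simp
  have "chk G gens (pe x n) \<noteq> 0"
    unfolding chk_sem
  proof (intro ballI)
    fix di a assume di: "di \<in> set (0 # list_decode n)" and a: "a \<in> set [0..<2 * length gens]"
    have "wv G gens di \<in> insert \<one> (word_val G gens ` set Dw)" using di ld by auto
    with Dw have "\<forall>a<2 * length gens.
     \<exists>d'\<in>insert \<one> (word_val G gens ` set Dw). \<forall>b\<in>set Bl.
       H #> (b \<otimes> wv G gens di \<otimes> gen_letter G gens a) = H #> (b \<otimes> d')" by (rule bspec)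
    moreover have "a < 2 * length gens" using a by simp
    ultimately obtain d' where d': "d' \<in> insert \<one> (word_val G gens ` set Dw)"
      "\<forall>b\<in>set Bl. H #> (b \<otimes> wv G gens di \<otimes> gen_letter G gens a) = H #> (b \<otimes> d')"
      by blast
    obtain dk where dk: "dk \<in> set (0 # list_decode n)" "wv G gens dk = d'"
    proof (cases "d' = \<one>")
      case True
      then show ?thesis using that[of 0] by simp
    next
      case False
      then obtain w where w: "w \<in> set Dw" "d' = word_val G gens w" using d'(1) by blast
      show ?thesis using that[of "list_encode w"] w ld by simp
    qed
    show "\<exists>dk\<in>set (0 # list_decode n).
            \<forall>b\<in>set (0 # list_decode (p2 (p2 x))).
               word_val G gens (list_decode b @ list_decode di @ [a] @ rev (map linv (list_decode dk)) @ rev (map linv (list_decode b)))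
               \<in> subgrp_of_words G gens (dec_words (p1 (p2 x)))"
    proof (intro bexI[OF _ dk(1)] ballI)
      fix b assume b: "b \<in> set (0 # list_decode (p2 (p2 x)))"
      then have "wv G gens b \<in> set Bl" unfolding Bl_def by auto
      then show "word_val G gens (list_decode b @ list_decode di @ [a] @ rev (map linv (list_decode dk)) @ rev (map linv (list_decode b)))
               \<in> subgrp_of_words G gens (dec_words (p1 (p2 x)))"
        using d'(2) dk(2) mem_check_iff[OF gs H] unfolding H_def by simp
    qed
  qed
  then show ?thesis by blast
qed

end


theorem proposition3p7:
  fixes G :: "('a, 'b) monoid_scheme" and gens :: "'a list"
  assumes "group G"
    and "set gens \<subseteq> carrier G"
    and "generate G (set gens) = carrier G"
    and "MPfi_decidable G gens"
  shows "GCPRec_decidable G gens"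
proof -
  define V where "V x = finite_index G (subgrp_of_words G gens (dec_words (p1 (p2 x))))" for x
  have orc: "cmp (MPfi_valid G gens) (\<lambda>q. if MPfi_yes G gens q then 1 else 0)"
    using assms(4) unfolding MPfi_decidable_def decidable_on_def cmp_def by blast
  have memrule: "cmp P (\<lambda>z. memc G gens (W z) (Hc z))"
    if "cmp P W" "cmp P Hc" "\<And>z. P z \<Longrightarrow> finite_index G (subgrp_of_words G gens (dec_words (Hc z)))" for P W Hc
    unfolding memc_def
    apply (rule cmp_o[OF orc, where f="\<lambda>z. pe (W z) (Hc z)"])
     apply (intro cmp_pe that)
    apply (simp add: MPfi_valid_def pe_def prod_encode_inverse that)
    done
  have c_chk: "cmp (\<lambda>y. V (p1 y)) (\<lambda>y. if chk G gens y = 0 then 1 else 0)"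
    unfolding chk_def
    by (intro cmp_if cmp_ballc cmp_bexc memrule cmp_appc cmp_invc cmp_basic) (auto simp: V_def)
  have c_ans: "cmp (\<lambda>y. V (p1 y)) (ans G gens)"
    unfolding ans_def
    by (intro cmp_bexc memrule cmp_appc cmp_invc cmp_basic) (auto simp: V_def)
  have ex: "\<exists>n. (if chk G gens (pe x n) = 0 then 1 else 0) = (0::nat)" if "V x" for x
    using group.chk_exists[OF assms(1,2,3)] that unfolding V_def by simp
  have c_F: "cmp V (\<lambda>x. ans G gens (pe x (LEAST n. (if chk G gens (pe x n) = 0 then 1 else 0) = (0::nat))))"
    apply (rule cmp_o[OF c_ans])
     apply (intro cmp_pe cmp_id cmp_Least[OF c_chk ex])
     apply assumption
    apply simp
    done
  then obtain f where f: "\<And>x. V x \<Longrightarrow> eval f x (ans G gens (pe x (LEAST n. (if chk G gens (pe x n) = 0 then 1 else 0) = (0::nat))))"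
    unfolding cmp_def by blast
  have "eval f x (if GCPRec_yes G gens x then 1 else 0)" if "GCPRec_valid G gens x" for x
  proof -
    have Vx: "V x" using that unfolding V_def GCPRec_valid_def p1_def p2_def .
    have "(if chk G gens (pe x (LEAST n. (if chk G gens (pe x n) = 0 then 1 else 0) = (0::nat))) = 0 then 1 else 0) = (0::nat)"
      by (rule LeastI_ex[OF ex[OF Vx]])
    then have "chk G gens (pe x (LEAST n. (if chk G gens (pe x n) = 0 then 1 else 0) = (0::nat))) \<noteq> 0"
      by (simp split: if_splits)
    from group.chk_correct[OF assms(1,2,3) this] f[OF Vx] show ?thesis by simp
  qed
  then show ?thesis unfolding GCPRec_decidable_def decidable_on_def by blast
qed


end
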